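(* Let $G$ be the group of orientation preserving affinities of $\mathbb R^2$ (realized as $3\times 3$ matrices with Lie algebra basis $e_1=E_{22}$, $e_2=E_{23}$, $e_3=E_{32}$, $e_4=E_{33}$, $e_5=E_{12}$, $e_6=E_{13}$), and $H$ the connected subgroup with Lie algebra $\langle e_1,e_4,e_5\rangle$. There is no global almost differentiable left A-loop with $G$ as group topologically generated by its left translations, $H$ as stabilizer of the identity, and $T_1\sigma(G/H)=\langle e_2,e_3,e_6\rangle$.
   Context: $E_{ij}$ denotes the $3\times3$ matrix unit. A loop is a set with a binary operation and two-sided identity $e$ with uniquely solvable left and right division; a left A-loop has every $\lambda_{xy}^{-1}\lambda_x\lambda_y$ an automorphism ($\lambda_a(y)=a\cdot y$). For a connected loop, $G$ is the group topologically generated by left translations, $H$ the stabilizer of $e$, and left translations form the image of a sharply transitive global section $\sigma:G/H\to G$, $\sigma(H)=1$; almost differentiable means $G$ Lie and $\sigma$ differentiable. *)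

theory Defs
  imports "HOL-Analysis.Analysis"
begin

type_synonym mat3 = "real^3^3"

definition Eu :: "3 \<Rightarrow> 3 \<Rightarrow> mat3" where
  "Eu i j = (\<chi> a b. if a = i \<and> b = j then 1 else 0)"

text \<open>The affine matrix [[1, t1, t2], [0, A11, A12], [0, A21, A22]]
  (first row carries the translation, lower right block the linear part,
   matching the Lie algebra basis E22,E23,E32,E33,E12,E13).\<close>
definition aff :: "(real^2) \<times> (real^2^2) \<Rightarrow> mat3" where
  "aff p = (let t = fst p; A = snd p in
     (\<chi> (i::3) (j::3). if i = 1 then (if j = 1 then 1 else if j = 2 then t$(1::2) else t$(2::2))
             else if j = 1 then 0
             else if i = 2 then (if j = 2 then A$(1::2)$(1::2) else A$(1::2)$(2::2))
             else (if j = 2 then A$(2::2)$(1::2) else A$(2::2)$(2::2))))"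

definition Upar :: "((real^2) \<times> (real^2^2)) set" where
  "Upar = UNIV \<times> {A. det A > 0}"

definition Gaff :: "mat3 set" where
  "Gaff = aff ` Upar"

text \<open>The connected subgroup H with Lie algebra spanned by E22, E33, E12.\<close>
definition Hsub :: "mat3 set" where
  "Hsub = {aff (\<chi> (k::2). if k = 1 then x else 0,
                \<chi> (i::2) (j::2). if i = 1 \<and> j = 1 then a else if i = 2 \<and> j = 2 then d else 0)
           | x a d. a > 0 \<and> d > 0}"

definition lcoset :: "mat3 \<Rightarrow> mat3 set" where
  "lcoset g = (\<lambda>h. g ** h) ` Hsub"

definition cosets :: "mat3 set set" where
  "cosets = lcoset ` Gaff"

definition act :: "mat3 \<Rightarrow> mat3 set \<Rightarrow> mat3 set" where
  "act g c = (\<lambda>x. g ** x) ` c"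

inductive_set gen_grp :: "mat3 set \<Rightarrow> mat3 set" for S where
  one: "mat 1 \<in> gen_grp S"
| gen: "s \<in> S \<Longrightarrow> s \<in> gen_grp S"
| mult: "a \<in> gen_grp S \<Longrightarrow> b \<in> gen_grp S \<Longrightarrow> a ** b \<in> gen_grp S"
| inv: "a \<in> gen_grp S \<Longrightarrow> matrix_inv a \<in> gen_grp S"

definition loop_mult :: "(mat3 set \<Rightarrow> mat3) \<Rightarrow> mat3 set \<Rightarrow> mat3 set \<Rightarrow> mat3 set" where
  "loop_mult \<sigma> p q = act (\<sigma> p) q"

definition sharply_transitive_section :: "(mat3 set \<Rightarrow> mat3) \<Rightarrow> bool" where
  "sharply_transitive_section \<sigma> \<longleftrightarrow>
     \<sigma> Hsub = mat 1 \<and>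
     (\<forall>c\<in>cosets. \<sigma> c \<in> Gaff \<and> \<sigma> c \<in> c) \<and>
     (\<forall>p\<in>cosets. \<forall>q\<in>cosets. \<exists>!c. c \<in> cosets \<and> act (\<sigma> c) p = q)"

definition left_A_loop :: "(mat3 set \<Rightarrow> mat3) \<Rightarrow> bool" where
  "left_A_loop \<sigma> \<longleftrightarrow>
     (\<forall>x\<in>cosets. \<forall>y\<in>cosets.
        (let f = matrix_inv (\<sigma> (loop_mult \<sigma> x y)) ** \<sigma> x ** \<sigma> y in
         \<forall>u\<in>cosets. \<forall>v\<in>cosets.
           act f (loop_mult \<sigma> u v) = loop_mult \<sigma> (act f u) (act f v)))"

definition top_generates :: "(mat3 set \<Rightarrow> mat3) \<Rightarrow> bool" where
  "top_generates \<sigma> \<longleftrightarrow> Gaff \<subseteq> closure (gen_grp (\<sigma> ` cosets))"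

definition sec_chart :: "(mat3 set \<Rightarrow> mat3) \<Rightarrow> (real^2) \<times> (real^2^2) \<Rightarrow> mat3" where
  "sec_chart \<sigma> p = \<sigma> (lcoset (aff p))"

definition almost_differentiable :: "(mat3 set \<Rightarrow> mat3) \<Rightarrow> bool" where
  "almost_differentiable \<sigma> \<longleftrightarrow> (\<forall>p\<in>Upar. sec_chart \<sigma> differentiable (at p))"

definition tangent_at_1 :: "(mat3 set \<Rightarrow> mat3) \<Rightarrow> mat3 set" where
  "tangent_at_1 \<sigma> = range (frechet_derivative (sec_chart \<sigma>) (at (0, mat 1)))"

end

theory Submission
  imports Defs
begin

lemma aff_nth: "aff (t,A) $ i $ j = (if i = 1 then (if j=1 then 1 else if j=2 then t$1 else t$2) else if j=1 then 0 else if i=2 then (if j=2 then A$1$1 else A$1$2) else (if j=2 then A$2$1 else A$2$2))"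
  by (simp add: aff_def)

definition mk2 :: "real \<Rightarrow> real \<Rightarrow> real^2" where "mk2 a b = (\<chi> i. if i = 1 then a else b)"
definition mkM :: "real\<Rightarrow>real\<Rightarrow>real\<Rightarrow>real\<Rightarrow>real^2^2" where
  "mkM a b c d = (\<chi> i j. if i=1 then (if j=1 then a else b) else (if j=1 then c else d))"

lemma mk2_nth[simp]: "mk2 a b $ 1 = a" "mk2 a b $ 2 = b" by (simp_all add: mk2_def)
lemma mkM_nth[simp]: "mkM a b c d $ 1 $ 1 = a" "mkM a b c d $ 1 $ 2 = b" "mkM a b c d $ 2 $ 1 = c" "mkM a b c d $ 2 $ 2 = d"
  by (simp_all add: mkM_def)

definition Hm :: "real \<Rightarrow> real \<Rightarrow> real \<Rightarrow> mat3" where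
  "Hm x a d = aff (\<chi> (k::2). if k = 1 then x else 0,
                \<chi> (i::2) (j::2). if i = 1 \<and> j = 1 then a else if i = 2 \<and> j = 2 then d else 0)"

lemma Hsub_Hm: "Hsub = {Hm x a d | x a d. a > 0 \<and> d > 0}"
  by (simp add: Hsub_def Hm_def)

lemma Hm_nth: "Hm x a d $ i $ j = (if i = 1 then (if j=1 then 1 else if j=2 then x else 0) else if j=1 then 0 else if i=2 then (if j=2 then a else 0) else (if j=2 then 0 else d))"
  by (simp add: Hm_def aff_nth)

lemma Hm_mult: "Hm x a d ** Hm y b e = Hm (y + x*b) (a*b) (d*e)"
  by (simp add: vec_eq_iff forall_3 matrix_matrix_mult_def sum_3 Hm_nth)

lemma key:
  fixes t :: "real^2" and A :: "real^2^2"
  assumes e1: "A$1$1*k11 + A$1$2*k21 = a*k11" "A$2$1*k11 + A$2$2*k21 = a*k21"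
   and e2: "A$1$1*k12 + A$1$2*k22 = d*k12" "A$2$1*k12+A$2$2*k22 = d*k22"
   and pos: "a>0" "d>0" "d\<noteq>1" "k11*k22 - k12*k21 > 0"
 shows "\<exists>k\<in>Gaff. \<exists>h\<in>Hsub. aff(t,A) ** k = k ** h"
proof -
  define \<tau> where "\<tau> = (t$1*k12 + t$2*k22)/(d-1)"
  define x where "x = t$1*k11 + t$2*k21"
  have dd: "\<tau> * d = \<tau> + t$1*k12 + t$2*k22" using pos(3) unfolding \<tau>_def by (simp add: field_simps)
  let ?k = "aff (mk2 0 \<tau>, mkM k11 k12 k21 k22)"
  have "?k \<in> Gaff" unfolding Gaff_def Upar_def using pos(4) by (auto simp: det_2)
  moreover have "Hm x a d \<in> Hsub" using pos unfolding Hsub_Hm by blast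
  moreover have "aff(t,A) ** ?k = ?k ** Hm x a d"
    using e1 e2 dd by (simp add: vec_eq_iff forall_3 matrix_matrix_mult_def sum_3 Hm_nth aff_nth x_def algebra_simps)
  ultimately show ?thesis by blast
qed

lemma key2:
  fixes t :: "real^2" and A :: "real^2^2"
  assumes q: "A$1$2 > 0" and dt: "det A > 0" and tr: "A$1$1 + A$2$2 > 0"
    and dl: "(A$1$1 - A$2$2)^2 + 4*A$1$2*A$2$1 > 0"
  shows "\<exists>k\<in>Gaff. \<exists>h\<in>Hsub. aff(t,A) ** k = k ** h"
proof -
  define p where "p = A$1$1"
  define qq where "qq = A$1$2"
  define r where "r = A$2$1"
  define u where "u = A$2$2"
  define w where "w = sqrt ((p-u)^2 + 4*qq*r)"
  have w0: "w > 0" using dl unfolding w_def p_def qq_def r_def u_def by simp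
  have w2: "w^2 = (p-u)^2 + 4*qq*r" using dl unfolding w_def p_def qq_def r_def u_def by simp
  have dt': "p*u - qq*r > 0" using dt unfolding p_def qq_def r_def u_def det_2 by simp
  have tr': "p + u > 0" using tr unfolding p_def u_def by simp
  define l1 where "l1 = (p+u-w)/2"
  define l2 where "l2 = (p+u+w)/2"
  have "w^2 < (p+u)^2" using w2 dt' by (simp add: power2_eq_square algebra_simps)
  hence "w < p + u" using tr' w0 by (smt (verit) power_mono)
  hence l1p: "l1 > 0" and l2p: "l2 > 0" and l12: "l1 < l2" using w0 unfolding l1_def l2_def by auto
  have ch: "r*qq + u*(l - p) = l*(l-p)" if "l = l1 \<or> l = l2" for l
  proof -
    have "p+u-2*l = w \<or> p+u-2*l = - w" using that unfolding l1_def l2_def by auto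
    hence "(p+u-2*l)^2 = w^2" by auto
    hence "(p+u-2*l)^2 = (p-u)^2 + 4*qq*r" using w2 by simp
    hence "4*(r*qq + u*(l - p)) = 4*(l*(l-p))" by (simp add: power2_eq_square algebra_simps)
    thus ?thesis by simp
  qed
  have qp: "qq > 0" using q unfolding qq_def by simp
  show ?thesis
  proof (cases "l2 = 1")
    case False
    show ?thesis
      apply (rule key[where a=l1 and d=l2 and ?k11.0=qq and ?k21.0="l1-p" and ?k12.0=qq and ?k22.0="l2-p"])
      using ch[of l1] ch[of l2] l1p l2p False qp w0 l12
      unfolding p_def qq_def r_def u_def
      by (auto simp: algebra_simps mult_pos_pos)
  next
    case True
    hence "l1 \<noteq> 1" using l12 by simp
    show ?thesis
      apply (rule key[where a=l2 and d=l1 and ?k11.0="-qq" and ?k21.0="-(l2-p)" and ?k12.0=qq and ?k22.0="l1-p"])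
      using ch[of l1] ch[of l2] l1p l2p \<open>l1 \<noteq> 1\<close> qp w0 l12
      unfolding p_def qq_def r_def u_def
      by (auto simp: algebra_simps mult_pos_pos)
  qed
qed

lemma Hm_in: "a > 0 \<Longrightarrow> d > 0 \<Longrightarrow> Hm x a d \<in> Hsub"
  unfolding Hsub_Hm by blast

lemma Hsub_mult: "h \<in> Hsub \<Longrightarrow> h' \<in> Hsub \<Longrightarrow> h ** h' \<in> Hsub"
  unfolding Hsub_Hm by (auto simp: Hm_mult) (metis mult_pos_pos)

lemma Hsub_div: assumes "h \<in> Hsub" "h' \<in> Hsub" shows "\<exists>h''\<in>Hsub. h' = h ** h''"
proof -
  obtain x a d where h: "h = Hm x a d" "a>0" "d>0" using assms(1) unfolding Hsub_Hm by blast
  obtain y b e where h': "h' = Hm y b e" "b>0" "e>0" using assms(2) unfolding Hsub_Hm by blast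
  have "h' = h ** Hm (y - x*(b/a)) (b/a) (e/d)" using h h' by (simp add: Hm_mult)
  moreover have "Hm (y - x*(b/a)) (b/a) (e/d) \<in> Hsub" using h h' by (intro Hm_in) auto
  ultimately show ?thesis by blast
qed

lemma lcoset_mult: assumes "h \<in> Hsub" shows "lcoset (g ** h) = lcoset g"
proof
  show "lcoset (g ** h) \<subseteq> lcoset g" unfolding lcoset_def
  proof
    fix z assume "z \<in> (**) (g ** h) ` Hsub"
    then obtain h' where "h' \<in> Hsub" "z = g ** h ** h'" by auto
    hence "z = g ** (h ** h')" "h ** h' \<in> Hsub" using Hsub_mult[OF assms] by (auto simp: matrix_mul_assoc)
    thus "z \<in> (**) g ` Hsub" by blast
  qed
  show "lcoset g \<subseteq> lcoset (g ** h)" unfolding lcoset_def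
  proof
    fix z assume "z \<in> (**) g ` Hsub"
    then obtain h' where "h' \<in> Hsub" "z = g ** h'" by auto
    then obtain h'' where "h''\<in>Hsub" "h' = h ** h''" using Hsub_div[OF assms] by blast
    thus "z \<in> (**) (g ** h) ` Hsub" using \<open>z = g ** h'\<close> by (auto simp: matrix_mul_assoc)
  qed
qed

lemma act_lcoset: "act s (lcoset k) = lcoset (s ** k)"
  unfolding act_def lcoset_def by (auto simp: image_image matrix_mul_assoc)

lemma aff_one: "aff (0, mat 1) = mat 1"
  by (simp add: vec_eq_iff forall_3 aff_nth mat_def)

lemma one_Gaff: "mat 1 \<in> Gaff"
proof -
  have "(0::real^2, mat 1::real^2^2) \<in> Upar" unfolding Upar_def by simp
  thus ?thesis unfolding Gaff_def using aff_one by (metis image_eqI)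
qed

lemma lcoset_one: "lcoset (mat 1) = Hsub"
  unfolding lcoset_def by (simp add: matrix_mul_lid)

lemma Hsub_cosets: "Hsub \<in> cosets"
  unfolding cosets_def using one_Gaff lcoset_one by force

lemma no_fixed:
  assumes st: "sharply_transitive_section \<sigma>" and c: "c \<in> cosets" and ne: "\<sigma> c \<noteq> mat 1"
    and k: "k \<in> Gaff" and h: "h \<in> Hsub" and eq: "\<sigma> c ** k = k ** h"
  shows False
proof -
  let ?p = "lcoset k"
  have p: "?p \<in> cosets" using k unfolding cosets_def by blast
  have s1: "\<sigma> Hsub = mat 1" using st unfolding sharply_transitive_section_def by blast
  have u: "\<exists>!c. c \<in> cosets \<and> act (\<sigma> c) ?p = ?p" using st p unfolding sharply_transitive_section_def by blast
  have a1: "act (\<sigma> c) ?p = ?p" using act_lcoset eq lcoset_mult[OF h] by metis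
  have a2: "act (\<sigma> Hsub) ?p = ?p" using act_lcoset s1 by (metis matrix_mul_lid)
  have "c = Hsub" using u a1 a2 c Hsub_cosets by blast
  thus False using ne s1 by simp
qed

lemma comp_lim:
  fixes \<gamma> :: "real \<Rightarrow> mat3"
  assumes "(\<gamma> has_derivative (\<lambda>e. e *\<^sub>R X)) (at 0)"
  shows "((\<lambda>e. (\<gamma> e $ i $ j - \<gamma> 0 $ i $ j)/e) \<longlongrightarrow> X $ i $ j) (at 0)"
proof -
  have bl: "bounded_linear (\<lambda>M::mat3. M $ i $ j)"
    by (rule bounded_linear_compose[OF bounded_linear_vec_nth bounded_linear_vec_nth])
  have "((\<lambda>e. \<gamma> e $ i $ j) has_derivative (\<lambda>e. (e *\<^sub>R X) $ i $ j)) (at 0)"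
    by (rule bounded_linear.has_derivative[OF bl assms])
  moreover have "(\<lambda>e. (e *\<^sub>R X) $ i $ j) = (*) (X $ i $ j)" by (rule ext) simp
  ultimately have "((\<lambda>e. \<gamma> e $ i $ j) has_derivative (*) (X $ i $ j)) (at 0)"
    by simp
  hence "((\<lambda>e. \<gamma> e $ i $ j) has_field_derivative (X $ i $ j)) (at 0)"
    by (simp add: has_field_derivative_def)
  thus ?thesis by (simp add: has_field_derivative_iff)
qed

theorem proposition21:
  shows "\<not> (\<exists>\<sigma>. sharply_transitive_section \<sigma> \<and> left_A_loop \<sigma> \<and> top_generates \<sigma>
              \<and> almost_differentiable \<sigma>
              \<and> tangent_at_1 \<sigma> = span {Eu 2 3, Eu 3 2, Eu 1 3})"
proof
  assume "\<exists>\<sigma>. sharply_transitive_section \<sigma> \<and> left_A_loop \<sigma> \<and> top_generates \<sigma>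
              \<and> almost_differentiable \<sigma>
              \<and> tangent_at_1 \<sigma> = span {Eu 2 3, Eu 3 2, Eu 1 3}"
  then obtain \<sigma> where st: "sharply_transitive_section \<sigma>" and ad: "almost_differentiable \<sigma>"
    and tg: "tangent_at_1 \<sigma> = span {Eu 2 3, Eu 3 2, Eu 1 3}" by blast
  define p0 where "p0 = (0::real^2, mat 1::real^2^2)"
  define f where "f = sec_chart \<sigma>"
  define D where "D = frechet_derivative f (at p0)"
  have p0U: "p0 \<in> Upar" unfolding p0_def Upar_def by simp
  have hasD: "(f has_derivative D) (at p0)"
    using ad p0U unfolding almost_differentiable_def f_def D_def
    by (simp add: frechet_derivative_works[symmetric])
  define X where "X = Eu 2 3 + Eu 3 2"
  have "X \<in> span {Eu 2 3, Eu 3 2, Eu 1 3}" unfolding X_def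
    by (intro span_add span_base) auto
  hence "X \<in> range D" using tg unfolding tangent_at_1_def D_def f_def p0_def by simp
  then obtain v where Dv: "D v = X" by blast
  have lin: "linear D" using hasD has_derivative_linear by blast
  define \<gamma> where "\<gamma> = (\<lambda>e::real. f (p0 + e *\<^sub>R v))"
  have d1: "((\<lambda>e::real. p0 + e *\<^sub>R v) has_derivative (\<lambda>e. e *\<^sub>R v)) (at 0)"
    by (auto intro!: derivative_eq_intros)
  have hasD0: "(f has_derivative D) (at ((\<lambda>e::real. p0 + e *\<^sub>R v) 0))" using hasD by simp
  have "(\<gamma> has_derivative (\<lambda>e. D (e *\<^sub>R v))) (at 0)"
    unfolding \<gamma>_def by (rule has_derivative_compose[OF d1 hasD0])
  hence dg: "(\<gamma> has_derivative (\<lambda>e. e *\<^sub>R X)) (at 0)"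
    using lin Dv by (simp add: linear_cmul)
  have g0: "\<gamma> 0 = mat 1"
  proof -
    have "\<gamma> 0 = \<sigma> (lcoset (aff p0))" unfolding \<gamma>_def f_def sec_chart_def by simp
    also have "\<dots> = \<sigma> Hsub" unfolding p0_def aff_one lcoset_one ..
    also have "\<dots> = mat 1" using st unfolding sharply_transitive_section_def by blast
    finally show ?thesis .
  qed
  have X23: "X $ 2 $ 3 = 1" and X32: "X $ 3 $ 2 = 1" and X22: "X $ 2 $ 2 = 0" and X33: "X $ 3 $ 3 = 0"
    unfolding X_def Eu_def by simp_all
  define Q where "Q = (\<lambda>e. \<gamma> e $ 2 $ 3 / e)"
  define R where "R = (\<lambda>e. \<gamma> e $ 3 $ 2 / e)"
  define P where "P = (\<lambda>e. (\<gamma> e $ 2 $ 2 - 1) / e)"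
  define U where "U = (\<lambda>e. (\<gamma> e $ 3 $ 3 - 1) / e)"
  have LQ: "(Q \<longlongrightarrow> 1) (at 0)" using comp_lim[OF dg, of 2 3] g0 X23 unfolding Q_def by (simp add: mat_def)
  have LR: "(R \<longlongrightarrow> 1) (at 0)" using comp_lim[OF dg, of 3 2] g0 X32 unfolding R_def by (simp add: mat_def)
  have LP: "(P \<longlongrightarrow> 0) (at 0)" using comp_lim[OF dg, of 2 2] g0 X22 unfolding P_def by (simp add: mat_def)
  have LU: "(U \<longlongrightarrow> 0) (at 0)" using comp_lim[OF dg, of 3 3] g0 X33 unfolding U_def by (simp add: mat_def)
  have e1: "\<forall>\<^sub>F e in at 0. Q e > 0" using LQ by (rule order_tendstoD) simp
  have "((\<lambda>e. (P e - U e)^2 + 4 * Q e * R e) \<longlongrightarrow> (0 - 0)^2 + 4 * 1 * 1) (at 0)"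
    by (intro tendsto_intros LP LU LQ LR)
  hence e2: "\<forall>\<^sub>F e in at 0. (P e - U e)^2 + 4 * Q e * R e > 0" by (rule order_tendstoD) simp
  have "((\<lambda>e. 2 + e * (P e + U e)) \<longlongrightarrow> 2 + 0 * (0 + 0)) (at 0)"
    by (intro tendsto_intros LP LU)
  hence e3: "\<forall>\<^sub>F e in at 0. 2 + e * (P e + U e) > 0" by (rule order_tendstoD) simp
  define M where "M = snd v"
  have detf: "\<And>e. det (snd (p0 + e *\<^sub>R v)) = (1 + e*M$1$1)*(1+e*M$2$2) - (e*M$1$2)*(e*M$2$1)"
    unfolding M_def p0_def by (auto simp: det_2 mat_def)
  have "((\<lambda>e. (1 + e*M$1$1)*(1+e*M$2$2) - (e*M$1$2)*(e*M$2$1)) \<longlongrightarrow> (1 + 0*M$1$1)*(1+0*M$2$2) - (0*M$1$2)*(0*M$2$1)) (at (0::real))"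
    by (intro tendsto_intros)
  hence "\<forall>\<^sub>F e in at 0. (1 + e*M$1$1)*(1+e*M$2$2) - (e*M$1$2)*(e*M$2$1) > 0" by (rule order_tendstoD) simp
  hence e4: "\<forall>\<^sub>F e in at 0. det (snd (p0 + e *\<^sub>R v)) > 0" by (simp only: detf)
  have "\<forall>\<^sub>F e in at_right 0. Q e > 0 \<and> (P e - U e)^2 + 4 * Q e * R e > 0 \<and> 2 + e * (P e + U e) > 0
      \<and> det (snd (p0 + e *\<^sub>R v)) > 0 \<and> (0::real) < e"
  proof -
    have r1: "\<forall>\<^sub>F e in at_right 0. Q e > 0" using e1 unfolding eventually_at_split by blast
    have r2: "\<forall>\<^sub>F e in at_right 0. (P e - U e)^2 + 4 * Q e * R e > 0" using e2 unfolding eventually_at_split by blast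
    have r3: "\<forall>\<^sub>F e in at_right 0. 2 + e * (P e + U e) > 0" using e3 unfolding eventually_at_split by blast
    have r4: "\<forall>\<^sub>F e in at_right 0. det (snd (p0 + e *\<^sub>R v)) > 0" using e4 unfolding eventually_at_split by blast
    show ?thesis using r1 r2 r3 r4 eventually_at_right_less[of "0::real"] by eventually_elim auto
  qed
  then obtain e where Qe: "Q e > 0" and De: "(P e - U e)^2 + 4 * Q e * R e > 0"
    and Te: "2 + e * (P e + U e) > 0" and dete: "det (snd (p0 + e *\<^sub>R v)) > 0" and ep: "e > 0"
    using eventually_happens'[OF trivial_limit_at_right_real] by blast
  define c where "c = lcoset (aff (p0 + e *\<^sub>R v))"
  have "p0 + e *\<^sub>R v \<in> Upar" using dete unfolding Upar_def by (cases "p0 + e *\<^sub>R v") auto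
  hence c: "c \<in> cosets" unfolding c_def cosets_def Gaff_def by blast
  have sc: "\<sigma> c = \<gamma> e" unfolding c_def \<gamma>_def f_def sec_chart_def ..
  have "\<sigma> c \<in> Gaff" using st c unfolding sharply_transitive_section_def by blast
  then obtain t A where tA: "\<sigma> c = aff (t, A)" and dA: "det A > 0" unfolding Gaff_def Upar_def by auto
  have A12: "A$1$2 = e * Q e" using tA sc ep aff_nth[of t A 2 3] unfolding Q_def by simp
  have A21: "A$2$1 = e * R e" using tA sc ep aff_nth[of t A 3 2] unfolding R_def by simp
  have A11: "A$1$1 = 1 + e * P e" using tA sc ep aff_nth[of t A 2 2] unfolding P_def by simp
  have A22: "A$2$2 = 1 + e * U e" using tA sc ep aff_nth[of t A 3 3] unfolding U_def by simp
  have q: "A$1$2 > 0" using A12 Qe ep by simp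
  have tr: "A$1$1 + A$2$2 > 0" using A11 A22 Te by (simp add: algebra_simps)
  have "(A$1$1 - A$2$2)^2 + 4*A$1$2*A$2$1 = e^2 * ((P e - U e)^2 + 4 * Q e * R e)"
    unfolding A11 A22 A12 A21 by (simp add: power2_eq_square algebra_simps)
  hence dl: "(A$1$1 - A$2$2)^2 + 4*A$1$2*A$2$1 > 0" using De ep by simp
  obtain k h where k: "k \<in> Gaff" and h: "h \<in> Hsub" and eq: "aff (t,A) ** k = k ** h"
    using key2[OF q dA tr dl] by blast
  have "\<sigma> c \<noteq> mat 1"
  proof
    assume "\<sigma> c = mat 1"
    hence "A $ 1 $ 2 = 0" using tA aff_nth[of t A 2 3] by (simp add: mat_def)
    thus False using q by simp
  qed
  thus False using no_fixed[OF st c _ k h] eq tA by simp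
qed

end
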